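(* Let $k\in\{1,\dots,K\}$ and $\epsilon>0$. Let $\Lambda\subset\mathbb N$ be a random set of instants and $(\Lambda(s))_{s\ge1}$ random sets such that (i) $\Lambda\subset\bigcup_{s\ge1}\Lambda(s)$; (ii) for all $s\ge1$ and $n\in\Lambda(s)$, $t_k(n)\ge\epsilon s$; (iii) $|\Lambda(s)|\le1$ for all $s$; (iv) for each $n$, the event $\{n\in\Lambda(s)\}$ is $\mathcal F_n$-measurable. Then for every $\delta>0$, $$\mathbb E\Big[\sum_{n\ge1}\mathbf 1\{n\in\Lambda,\ |\hat\mu_k(n)-\mu_k|>\delta\}\Big]\le\frac1{\epsilon\delta^2}.$$
   Context: Stochastic bandit with $K$ arms; arm $k$ has i.i.d. rewards $X_k(t)\in[0,1]$ with mean $\mu_k$, independent across arms. A policy selects $k(n)$ based only on past selections and observed rewards. $t_k(n)=\sum_{t\le n}\mathbf 1\{k(t)=k\}$ and $\hat\mu_k(n)=\frac1{t_k(n)}\sum_{t\le n}\mathbf 1\{k(t)=k\}X_k(t)$ (empirical mean of arm $k$). $\mathcal F_n$ is the $\sigma$-algebra generated by $(X_j(t))_{1\le t\le n,\,1\le j\le K}$ (together with the policy's choices up to $n$). *)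

theory Defs
  imports "HOL-Probability.Probability"
begin

definition tk :: "(nat \<Rightarrow> 'a \<Rightarrow> nat) \<Rightarrow> nat \<Rightarrow> nat \<Rightarrow> 'a \<Rightarrow> nat" where
  "tk sel k n \<omega> = card {t \<in> {1..n}. sel t \<omega> = k}"

text \<open>Empirical mean of arm k at time n (the value for tk = 0 is irrelevant).\<close>
definition muhat :: "(nat \<Rightarrow> nat \<Rightarrow> 'a \<Rightarrow> real) \<Rightarrow> (nat \<Rightarrow> 'a \<Rightarrow> nat) \<Rightarrow> nat \<Rightarrow> nat \<Rightarrow> 'a \<Rightarrow> real" where
  "muhat X sel k n \<omega> =
     (\<Sum>t\<in>{1..n}. if sel t \<omega> = k then X k t \<omega> else 0) / real (tk sel k n \<omega>)"

text \<open>Sigma-algebra of the history strictly before time n: past selections and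
  the rewards observed (those of the selected arms).\<close>
definition hist_sigma :: "'a measure \<Rightarrow> (nat \<Rightarrow> nat \<Rightarrow> 'a \<Rightarrow> real) \<Rightarrow> (nat \<Rightarrow> 'a \<Rightarrow> nat) \<Rightarrow> nat \<Rightarrow> 'a measure" where
  "hist_sigma M X sel n = sigma (space M)
     {(\<lambda>\<omega>. (sel t \<omega>, X (sel t \<omega>) t \<omega>)) -` A \<inter> space M | t A.
        t \<in> {1..<n} \<and> A \<in> sets (count_space UNIV \<Otimes>\<^sub>M borel)}"

definition Fsig :: "'a measure \<Rightarrow> nat \<Rightarrow> (nat \<Rightarrow> nat \<Rightarrow> 'a \<Rightarrow> real) \<Rightarrow> (nat \<Rightarrow> 'a \<Rightarrow> nat) \<Rightarrow> nat \<Rightarrow> 'a measure" where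
  "Fsig M K X sel n = sigma (space M)
     ({X j t -` B \<inter> space M | j t B. j \<in> {1..K} \<and> t \<in> {1..n} \<and> B \<in> sets borel}
      \<union> {sel t -` A \<inter> space M | t A. t \<in> {1..n}})"

end

theory Submission imports Defs begin

locale bandit = prob_space M for M :: "'a measure" +
  fixes K :: nat and X :: "nat \<Rightarrow> nat \<Rightarrow> 'a \<Rightarrow> real" and mu :: "nat \<Rightarrow> real"
    and sel :: "nat \<Rightarrow> 'a \<Rightarrow> nat" and k :: nat
  assumes X_rv: "\<And>j t. j \<in> {1..K} \<Longrightarrow> t \<ge> 1 \<Longrightarrow> X j t \<in> borel_measurable M"
    and X_range: "\<And>j t \<omega>. j \<in> {1..K} \<Longrightarrow> t \<ge> 1 \<Longrightarrow> \<omega> \<in> space M \<Longrightarrow> X j t \<omega> \<in> {0..1}"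
    and X_indep: "indep_vars (\<lambda>_. borel) (\<lambda>(j, t). X j t) ({1..K} \<times> {1..})"
    and X_ident: "\<And>j t. j \<in> {1..K} \<Longrightarrow> t \<ge> 1 \<Longrightarrow> distr M borel (X j t) = distr M borel (X j 1)"
    and X_mean: "\<And>j. j \<in> {1..K} \<Longrightarrow> expectation (X j 1) = mu j"
    and sel_range: "\<And>n \<omega>. n \<ge> 1 \<Longrightarrow> \<omega> \<in> space M \<Longrightarrow> sel n \<omega> \<in> {1..K}"
    and sel_policy: "\<And>n. n \<ge> 1 \<Longrightarrow> sel n \<in> measurable (hist_sigma M X sel n) (count_space UNIV)"
    and k: "k \<in> {1..K}"
begin

definition G :: "nat \<Rightarrow> 'a set set" where
  "G N = {X j t -` B \<inter> space M | j t B. j \<in> {1..K} \<and> t \<in> {1..N} \<and> B \<in> sets borel}"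

definition Hm :: "nat \<Rightarrow> 'a measure" where
  "Hm N = sigma (space M) (G N)"

lemma G_Pow: "G N \<subseteq> Pow (space M)"
  unfolding G_def by auto

lemma G_sets: "G N \<subseteq> sets M"
  unfolding G_def using X_rv by (auto intro!: measurable_sets)

lemma space_Hm[simp]: "space (Hm N) = space M"
  unfolding Hm_def using G_Pow by simp

lemma sets_Hm: "sets (Hm N) = sigma_sets (space M) (G N)"
  unfolding Hm_def using G_Pow by (simp add: sets_measure_of)

lemma Hm_sub: "sets (Hm N) \<subseteq> sets M"
  unfolding sets_Hm using G_sets by (rule sets.sigma_sets_subset)

lemma subalg_Hm: "subalgebra M (Hm N)"
  unfolding subalgebra_def using Hm_sub by simp

lemma G_mono: "N \<le> N' \<Longrightarrow> G N \<subseteq> G N'"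
  unfolding G_def by fastforce

lemma Hm_mono: "N \<le> N' \<Longrightarrow> sets (Hm N) \<subseteq> sets (Hm N')"
  unfolding sets_Hm by (rule sigma_sets_mono) (use G_mono sigma_sets.Basic in blast)

lemma subalg_Hm_mono: "N \<le> N' \<Longrightarrow> subalgebra (Hm N') (Hm N)"
  unfolding subalgebra_def using Hm_mono by simp

lemma X_Hm: "j \<in> {1..K} \<Longrightarrow> t \<in> {1..N} \<Longrightarrow> X j t \<in> borel_measurable (Hm N)"
proof (rule measurableI)
  fix B :: "real set" assume "j \<in> {1..K}" "t \<in> {1..N}" "B \<in> sets borel"
  then have "X j t -` B \<inter> space M \<in> G N" unfolding G_def by blast
  then show "X j t -` B \<inter> space (Hm N) \<in> sets (Hm N)"
    unfolding sets_Hm by auto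
qed auto

lemma sel_Hm: "n \<ge> 1 \<Longrightarrow> sel n \<in> measurable (Hm (n - 1)) (count_space UNIV)"
proof (induction n rule: less_induct)
  case (less n)
  have hs: "sets (hist_sigma M X sel n) \<subseteq> sets (Hm (n - 1))"
  proof -
    let ?H = "{(\<lambda>\<omega>. (sel t \<omega>, X (sel t \<omega>) t \<omega>)) -` A \<inter> space M | t A.
        t \<in> {1..<n} \<and> A \<in> sets (count_space UNIV \<Otimes>\<^sub>M borel)}"
    have HP: "?H \<subseteq> Pow (space M)" by auto
    have "?H \<subseteq> sets (Hm (n - 1))"
    proof
      fix S assume "S \<in> ?H"
      then obtain t A where S: "S = (\<lambda>\<omega>. (sel t \<omega>, X (sel t \<omega>) t \<omega>)) -` A \<inter> space M"
        and t: "t \<in> {1..<n}" and A: "A \<in> sets (count_space UNIV \<Otimes>\<^sub>M borel)" by blast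
      have st: "sel t \<in> measurable (Hm (n - 1)) (count_space UNIV)"
      proof -
        have "t - 1 \<le> n - 1" using t by auto
        then show ?thesis using less.IH[of t] t measurable_from_subalg[OF subalg_Hm_mono[of "t - 1" "n - 1"]] by auto
      qed
      have st2: "sel t \<in> measurable (Hm (n - 1)) (count_space {1..K})"
        unfolding measurable_count_space_eq2[OF finite_atLeastAtMost]
      proof (intro conjI ballI)
        show "sel t \<in> space (Hm (n - 1)) \<rightarrow> {1..K}" using sel_range t by auto
        fix a show "sel t -` {a} \<inter> space (Hm (n - 1)) \<in> sets (Hm (n - 1))"
          using measurable_sets[OF st] by simp
      qed
      have "(\<lambda>\<omega>. X (sel t \<omega>) t \<omega>) \<in> borel_measurable (Hm (n - 1))"
        by (rule measurable_compose_countable'[OF _ st2]) (use t in \<open>auto intro!: X_Hm\<close>)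
      then have "(\<lambda>\<omega>. (sel t \<omega>, X (sel t \<omega>) t \<omega>)) \<in> measurable (Hm (n - 1)) (count_space UNIV \<Otimes>\<^sub>M borel)"
        using st by (intro measurable_Pair) auto
      from measurable_sets[OF this A] show "S \<in> sets (Hm (n - 1))" using S by simp
    qed
    then have "sigma_sets (space (Hm (n - 1))) ?H \<subseteq> sets (Hm (n - 1))"
      by (rule sets.sigma_sets_subset)
    moreover have "sets (hist_sigma M X sel n) = sigma_sets (space M) ?H"
      unfolding hist_sigma_def using HP by (rule sets_measure_of)
    ultimately show ?thesis by simp
  qed
  show ?case
    by (rule measurable_from_subalg[OF _ sel_policy[OF less.prems]])
       (use hs in \<open>simp add: subalgebra_def hist_sigma_def space_measure_of_conv\<close>)
qed

lemma sel_HmN: "t \<in> {1..N} \<Longrightarrow> sel t \<in> measurable (Hm N) (count_space UNIV)"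
  by (rule measurable_from_subalg[OF subalg_Hm_mono[of "t - 1" N]]) (use sel_Hm[of t] in auto)

lemma Fsig_Hm: "sets (Fsig M K X sel n) \<subseteq> sets (Hm n)"
proof -
  let ?F = "{X j t -` B \<inter> space M | j t B. j \<in> {1..K} \<and> t \<in> {1..n} \<and> B \<in> sets borel}
      \<union> {sel t -` A \<inter> space M | t A. t \<in> {1..n}}"
  have FP: "?F \<subseteq> Pow (space M)" by auto
  have "?F \<subseteq> sets (Hm n)"
  proof
    fix S assume "S \<in> ?F"
    then consider "S \<in> G n" | t A where "S = sel t -` A \<inter> space M" "t \<in> {1..n}"
      unfolding G_def by blast
    then show "S \<in> sets (Hm n)"
    proof cases
      case 1 then show ?thesis unfolding sets_Hm by auto
    next
      case 2
      from measurable_sets[OF sel_HmN[OF 2(2)], of A] 2(1) show ?thesis by simp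
    qed
  qed
  then have "sigma_sets (space (Hm n)) ?F \<subseteq> sets (Hm n)"
    by (rule sets.sigma_sets_subset)
  moreover have "sets (Fsig M K X sel n) = sigma_sets (space M) ?F"
    unfolding Fsig_def using FP by (rule sets_measure_of)
  ultimately show ?thesis by simp
qed

definition Z :: "real \<Rightarrow> nat \<Rightarrow> 'a \<Rightarrow> real" where
  "Z l N \<omega> = exp (\<Sum>t\<in>{1..N}. if sel t \<omega> = k then l * (X k t \<omega> - mu k) - l\<^sup>2 / 8 else 0)"

lemma Z_0: "Z l 0 \<omega> = 1"
  unfolding Z_def by simp

lemma Z_pos: "Z l N \<omega> > 0"
  unfolding Z_def by simp

lemma Z_Suc: "Z l (Suc N) \<omega> = Z l N \<omega> *
   (if sel (Suc N) \<omega> = k then exp (l * (X k (Suc N) \<omega> - mu k) - l\<^sup>2 / 8) else 1)"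
proof -
  have "{1..Suc N} = insert (Suc N) {1..N}" by auto
  then show ?thesis unfolding Z_def by (simp add: exp_add)
qed

lemma Z_meas: "Z l N \<in> borel_measurable (Hm N)"
  unfolding Z_def
proof (rule measurable_compose[OF _ borel_measurable_exp], rule borel_measurable_sum)
  fix t assume t: "t \<in> {1..N}"
  have "{\<omega> \<in> space (Hm N). sel t \<omega> = k} = sel t -` {k} \<inter> space (Hm N)" by auto
  also have "\<dots> \<in> sets (Hm N)" by (rule measurable_sets[OF sel_HmN[OF t]]) simp
  finally have S: "{\<omega> \<in> space (Hm N). sel t \<omega> = k} \<in> sets (Hm N)" .
  have Xm: "X k t \<in> borel_measurable (Hm N)" using X_Hm[OF k t] .
  show "(\<lambda>\<omega>. if sel t \<omega> = k then l * (X k t \<omega> - mu k) - l\<^sup>2 / 8 else 0) \<in> borel_measurable (Hm N)"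
    by (rule measurable_If[OF _ _ S]) (use Xm in auto)
qed

lemma Z_measM: "Z l N \<in> borel_measurable M"
  by (rule measurable_from_subalg[OF subalg_Hm Z_meas])

definition CC :: "real \<Rightarrow> real" where "CC l = \<bar>l\<bar> * (1 + \<bar>mu k\<bar>) + l\<^sup>2 / 8"

lemma term_bound: "t \<ge> 1 \<Longrightarrow> \<omega> \<in> space M \<Longrightarrow> \<bar>l * (X k t \<omega> - mu k) - l\<^sup>2 / 8\<bar> \<le> CC l"
proof -
  assume "t \<ge> 1" "\<omega> \<in> space M"
  then have x: "X k t \<omega> \<in> {0..1}" using X_range k by auto
  have "\<bar>l * (X k t \<omega> - mu k) - l\<^sup>2 / 8\<bar> \<le> \<bar>l\<bar> * \<bar>X k t \<omega> - mu k\<bar> + l\<^sup>2 / 8"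
    using abs_triangle_ineq4[of "l * (X k t \<omega> - mu k)" "l\<^sup>2 / 8"] by (simp add: abs_mult)
  also have "\<dots> \<le> \<bar>l\<bar> * (1 + \<bar>mu k\<bar>) + l\<^sup>2 / 8"
    using x by (intro add_mono mult_left_mono) auto
  finally show ?thesis unfolding CC_def .
qed

lemma Z_bound: "\<omega> \<in> space M \<Longrightarrow> Z l N \<omega> \<le> exp (real N * CC l)"
proof -
  assume w: "\<omega> \<in> space M"
  have "(\<Sum>t\<in>{1..N}. if sel t \<omega> = k then l * (X k t \<omega> - mu k) - l\<^sup>2 / 8 else 0) \<le> (\<Sum>t\<in>{1..N}. CC l)"
  proof (rule sum_mono)
    fix t assume "t \<in> {1..N}"
    then show "(if sel t \<omega> = k then l * (X k t \<omega> - mu k) - l\<^sup>2 / 8 else 0) \<le> CC l"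
      using term_bound[of t \<omega> l] w by (auto simp: CC_def)
  qed
  then show ?thesis unfolding Z_def by simp
qed

lemma bnd_int: "f \<in> borel_measurable M \<Longrightarrow> (\<And>\<omega>. \<omega> \<in> space M \<Longrightarrow> \<bar>f \<omega>\<bar> \<le> B) \<Longrightarrow> integrable M (f :: 'a \<Rightarrow> real)"
  by (rule integrable_const_bound[where B=B]) (auto intro!: AE_I2)

lemma Z_int: "integrable M (Z l N)"
  by (rule bnd_int[OF Z_measM]) (use Z_bound Z_pos in \<open>auto simp: abs_of_pos\<close>)

lemma indep_Hm: "indep_set (sets (Hm N)) (sigma_sets (space M) {X k (Suc N) -` A \<inter> space M | A. A \<in> sets borel})"
proof -
  define E where "E = (\<lambda>i. {(\<lambda>(j, t). X j t) i -` A \<inter> space M | A. A \<in> sets (borel :: real measure)})"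
  define I where "I = (\<lambda>b::bool. if b then {1..K} \<times> {1..N} else {(k, Suc N)})"
  have ind: "indep_sets E ({1..K} \<times> {1..})"
    using X_indep unfolding indep_vars_def2 E_def by blast
  have ind2: "indep_sets E (\<Union>b. I b)"
    by (rule indep_sets_mono_index[OF _ ind]) (use k in \<open>auto simp: I_def\<close>)
  have IS: "Int_stable (E i)" for i
  proof (rule Int_stableI)
    fix a b assume "a \<in> E i" "b \<in> E i"
    then obtain A B where "a = (\<lambda>(j, t). X j t) i -` A \<inter> space M" "A \<in> sets borel"
        "b = (\<lambda>(j, t). X j t) i -` B \<inter> space M" "B \<in> sets borel" unfolding E_def by blast
    then show "a \<inter> b \<in> E i" unfolding E_def
      by (intro CollectI exI[of _ "A \<inter> B"]) auto
  qed
  have dj: "disjoint_family_on I UNIV"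
    unfolding disjoint_family_on_def I_def by auto
  have c: "indep_sets (\<lambda>b. sigma_sets (space M) (\<Union>i\<in>I b. E i)) UNIV"
    by (rule indep_sets_collect_sigma[OF ind2 IS dj])
  have eq: "(\<lambda>b. sigma_sets (space M) (\<Union>i\<in>I b. E i)) =
    case_bool (sets (Hm N)) (sigma_sets (space M) {X k (Suc N) -` A \<inter> space M | A. A \<in> sets borel})"
  proof (rule ext)
    fix b :: bool
    show "sigma_sets (space M) (\<Union>i\<in>I b. E i) = case_bool (sets (Hm N)) (sigma_sets (space M) {X k (Suc N) -` A \<inter> space M | A. A \<in> sets borel}) b"
    proof (cases b)
      case True
      have "(\<Union>i\<in>I b. E i) = G N"
      proof (intro equalityI subsetI)
        fix S assume "S \<in> (\<Union>i\<in>I b. E i)"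
        then obtain j t where jt: "j \<in> {1..K}" "t \<in> {1..N}" "S \<in> E (j, t)"
          using True unfolding I_def by auto
        then obtain A where "S = X j t -` A \<inter> space M" "A \<in> sets borel" unfolding E_def by auto
        then show "S \<in> G N" using jt unfolding G_def by blast
      next
        fix S assume "S \<in> G N"
        then obtain j t A where jt: "j \<in> {1..K}" "t \<in> {1..N}" "S = X j t -` A \<inter> space M" "A \<in> sets borel"
          unfolding G_def by blast
        then have "S \<in> E (j, t)" unfolding E_def by auto
        moreover have "(j, t) \<in> I b" using jt True unfolding I_def by auto
        ultimately show "S \<in> (\<Union>i\<in>I b. E i)" by blast
      qed
      then show ?thesis using True by (simp add: sets_Hm)
    next
      case False
      have "(\<Union>i\<in>I b. E i) = {X k (Suc N) -` A \<inter> space M | A. A \<in> sets borel}"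
        using False unfolding I_def E_def by simp
      then show ?thesis using False by simp
    qed
  qed
  show ?thesis using c unfolding indep_set_def eq .
qed

lemma indep_var_Hm:
  assumes F: "F \<in> borel_measurable (Hm N)" and h: "(h :: real \<Rightarrow> real) \<in> borel_measurable borel"
  shows "indep_var borel F borel (\<lambda>\<omega>. h (X k (Suc N) \<omega>))"
proof -
  have XS: "X k (Suc N) \<in> borel_measurable M" using X_rv[OF k] by auto
  let ?Y = "sigma_sets (space M) {X k (Suc N) -` A \<inter> space M | A. A \<in> sets borel}"
  have I: "sets (Hm N) \<subseteq> events" "?Y \<subseteq> events"
    "\<forall>a\<in>sets (Hm N). \<forall>b\<in>?Y. prob (a \<inter> b) = prob a * prob b"
    using indep_Hm[of N] unfolding indep_sets2_eq by auto
  let ?SA = "sigma_sets (space M) {F -` A \<inter> space M | A. A \<in> sets (borel :: real measure)}"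
  let ?SB = "sigma_sets (space M) {(\<lambda>\<omega>. h (X k (Suc N) \<omega>)) -` A \<inter> space M | A. A \<in> sets (borel :: real measure)}"
  have "{F -` A \<inter> space M | A. A \<in> sets (borel :: real measure)} \<subseteq> sets (Hm N)"
    using measurable_sets[OF F] by auto
  then have "sigma_sets (space (Hm N)) {F -` A \<inter> space M | A. A \<in> sets (borel :: real measure)} \<subseteq> sets (Hm N)"
    by (rule sets.sigma_sets_subset)
  then have SA: "?SA \<subseteq> sets (Hm N)" by simp
  have "{(\<lambda>\<omega>. h (X k (Suc N) \<omega>)) -` A \<inter> space M | A. A \<in> sets (borel :: real measure)} \<subseteq> ?Y"
  proof
    fix S assume "S \<in> {(\<lambda>\<omega>. h (X k (Suc N) \<omega>)) -` A \<inter> space M | A. A \<in> sets (borel :: real measure)}"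
    then obtain A where A: "S = (\<lambda>\<omega>. h (X k (Suc N) \<omega>)) -` A \<inter> space M" "A \<in> sets (borel :: real measure)" by blast
    have "h -` A \<inter> space borel \<in> sets borel" using measurable_sets[OF h A(2)] .
    moreover have "S = X k (Suc N) -` (h -` A \<inter> space borel) \<inter> space M" using A(1) by auto
    ultimately show "S \<in> ?Y" by blast
  qed
  then have SB: "?SB \<subseteq> ?Y" by (rule sigma_sets_mono)
  have "indep_set ?SA ?SB"
    unfolding indep_sets2_eq using I SA SB by blast
  moreover have "random_variable borel F"
    by (rule measurable_from_subalg[OF subalg_Hm F])
  moreover have "random_variable borel (\<lambda>\<omega>. h (X k (Suc N) \<omega>))"
    using measurable_compose[OF XS h] by (simp add: comp_def)
  ultimately show ?thesis unfolding indep_var_eq by blast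
qed

lemma expX: "t \<ge> 1 \<Longrightarrow> expectation (X k t) = mu k"
proof -
  assume t: "t \<ge> 1"
  have m: "X k t \<in> borel_measurable M" "X k 1 \<in> borel_measurable M" using X_rv k t by auto
  have "expectation (X k t) = integral\<^sup>L (distr M borel (X k t)) (\<lambda>x. x)"
    by (rule integral_distr[symmetric, OF m(1)]) simp
  also have "\<dots> = integral\<^sup>L (distr M borel (X k 1)) (\<lambda>x. x)" using X_ident[OF k t] by simp
  also have "\<dots> = expectation (X k 1)" by (rule integral_distr[OF m(2)]) simp
  finally show ?thesis using X_mean[OF k] by simp
qed

lemma hoeff: "t \<ge> 1 \<Longrightarrow> expectation (\<lambda>\<omega>. exp (l * (X k t \<omega> - mu k))) \<le> exp (l\<^sup>2 / 8)"
proof -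
  assume t: "t \<ge> 1"
  have m: "X k t \<in> borel_measurable M" using X_rv k t by auto
  have rng: "\<And>\<omega>. \<omega> \<in> space M \<Longrightarrow> X k t \<omega> \<in> {0..1}" using X_range k t by auto
  have meas: "(\<lambda>\<omega>. exp (l * (X k t \<omega> - mu k))) \<in> borel_measurable M" using m by measurable
  have conv: "expectation (\<lambda>\<omega>. exp (l * (X k t \<omega> - mu k))) =
      enn2real (\<integral>\<^sup>+\<omega>. ennreal (exp (l * (X k t \<omega> - mu k))) \<partial>M)"
    by (rule integral_eq_nn_integral[OF meas]) auto
  consider "l > 0" | "l < 0" | "l = 0" by linarith
  then show ?thesis
  proof cases
    case 1
    interpret I: interval_bounded_random_variable M "X k t" 0 1
      by unfold_locales (use m rng in \<open>auto intro!: AE_I2\<close>)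
    have "(\<integral>\<^sup>+\<omega>. ennreal (exp (l * (X k t \<omega> - mu k))) \<partial>M) \<le> ennreal (exp (l\<^sup>2 * (1 - 0)\<^sup>2 / 8))"
      using I.Hoeffdings_lemma_nn_integral[OF 1] expX[OF t] by simp
    then show ?thesis unfolding conv by (intro enn2real_leI) auto
  next
    case 2
    interpret I: interval_bounded_random_variable M "\<lambda>\<omega>. - X k t \<omega>" "-1" 0
      by unfold_locales (use m rng in \<open>auto intro!: AE_I2\<close>)
    have e: "expectation (\<lambda>\<omega>. - X k t \<omega>) = - mu k" using expX[OF t] by simp
    have "(\<integral>\<^sup>+\<omega>. ennreal (exp ((-l) * (- X k t \<omega> - expectation (\<lambda>\<omega>. - X k t \<omega>)))) \<partial>M) \<le> ennreal (exp ((-l)\<^sup>2 * (0 - (-1))\<^sup>2 / 8))"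
      using I.Hoeffdings_lemma_nn_integral[of "-l"] 2 by simp
    then have "(\<integral>\<^sup>+\<omega>. ennreal (exp (l * (X k t \<omega> - mu k))) \<partial>M) \<le> ennreal (exp (l\<^sup>2 / 8))"
      unfolding e by (simp add: algebra_simps)
    then show ?thesis unfolding conv by (intro enn2real_leI) auto
  next
    case 3
    then show ?thesis by (simp add: prob_space)
  qed
qed

lemma step:
  assumes A: "A \<in> sets (Hm N)"
  shows "(\<integral>\<omega>. Z l (Suc N) \<omega> * indicator A \<omega> \<partial>M) \<le> (\<integral>\<omega>. Z l N \<omega> * indicator A \<omega> \<partial>M)"
proof -
  define B where "B = {\<omega> \<in> space M. sel (Suc N) \<omega> = k}"
  have "B = sel (Suc N) -` {k} \<inter> space (Hm N)" unfolding B_def by auto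
  also have "\<dots> \<in> sets (Hm N)" using measurable_sets[OF sel_Hm[of "Suc N"], of "{k}"] by simp
  finally have B: "B \<in> sets (Hm N)" .
  have AM: "A \<in> sets M" "B \<in> sets M" using A B Hm_sub by auto
  have AB: "A - B \<in> sets (Hm N)" "A \<inter> B \<in> sets (Hm N)" using A B by auto
  have ABM: "A - B \<in> sets M" "A \<inter> B \<in> sets M" using AM by auto
  have Asp: "A \<subseteq> space M" using sets.sets_into_space[OF AM(1)] .
  define h where "h = (\<lambda>x::real. exp (l * (x - mu k) - l\<^sup>2 / 8))"
  define F1 where "F1 = (\<lambda>\<omega>. Z l N \<omega> * indicator (A - B) \<omega>)"
  define F2 where "F2 = (\<lambda>\<omega>. Z l N \<omega> * indicator (A \<inter> B) \<omega>)"
  have F2m: "F2 \<in> borel_measurable (Hm N)" unfolding F2_def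
    by (intro borel_measurable_times Z_meas borel_measurable_indicator AB)
  have iF1: "integrable M F1" unfolding F1_def by (rule integrable_real_mult_indicator[OF ABM(1) Z_int])
  have iF2: "integrable M F2" unfolding F2_def by (rule integrable_real_mult_indicator[OF ABM(2) Z_int])
  have hm: "h \<in> borel_measurable borel" unfolding h_def by measurable
  have XS: "X k (Suc N) \<in> borel_measurable M" using X_rv[OF k] by auto
  have ih: "integrable M (\<lambda>\<omega>. h (X k (Suc N) \<omega>))"
  proof (rule bnd_int)
    show "(\<lambda>\<omega>. h (X k (Suc N) \<omega>)) \<in> borel_measurable M"
      using measurable_compose[OF XS hm] by (simp add: comp_def)
    fix \<omega> assume "\<omega> \<in> space M"
    then have "l * (X k (Suc N) \<omega> - mu k) - l\<^sup>2 / 8 \<le> CC l" using term_bound[of "Suc N" \<omega> l] by auto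
    then show "\<bar>h (X k (Suc N) \<omega>)\<bar> \<le> exp (CC l)" unfolding h_def by simp
  qed
  have ind: "indep_var borel F2 borel (\<lambda>\<omega>. h (X k (Suc N) \<omega>))"
    by (rule indep_var_Hm[OF F2m hm])
  have prod: "(\<integral>\<omega>. F2 \<omega> * h (X k (Suc N) \<omega>) \<partial>M) = (\<integral>\<omega>. F2 \<omega> \<partial>M) * (\<integral>\<omega>. h (X k (Suc N) \<omega>) \<partial>M)"
    and iprod: "integrable M (\<lambda>\<omega>. F2 \<omega> * h (X k (Suc N) \<omega>))"
    using indep_var_lebesgue_integral[OF ind iF2 ih] indep_var_integrable[OF ind iF2 ih] by auto
  have "(\<integral>\<omega>. h (X k (Suc N) \<omega>) \<partial>M) = (\<integral>\<omega>. exp (l * (X k (Suc N) \<omega> - mu k)) / exp (l\<^sup>2 / 8) \<partial>M)"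
    unfolding h_def by (simp add: exp_diff)
  also have "\<dots> = expectation (\<lambda>\<omega>. exp (l * (X k (Suc N) \<omega> - mu k))) / exp (l\<^sup>2 / 8)"
    by (rule integral_divide_zero)
  also have "\<dots> \<le> 1" using hoeff[of "Suc N" l] by simp
  finally have Eh: "(\<integral>\<omega>. h (X k (Suc N) \<omega>) \<partial>M) \<le> 1" .
  have EF2: "0 \<le> (\<integral>\<omega>. F2 \<omega> \<partial>M)" unfolding F2_def
    by (rule Bochner_Integration.integral_nonneg) (use Z_pos[of l N] in \<open>auto intro: less_imp_le simp: indicator_def\<close>)
  have "(\<integral>\<omega>. F2 \<omega> * h (X k (Suc N) \<omega>) \<partial>M) \<le> (\<integral>\<omega>. F2 \<omega> \<partial>M)"
    unfolding prod using EF2 Eh by (simp add: mult_left_le)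
  have e1: "(\<integral>\<omega>. Z l (Suc N) \<omega> * indicator A \<omega> \<partial>M) = (\<integral>\<omega>. F1 \<omega> + F2 \<omega> * h (X k (Suc N) \<omega>) \<partial>M)"
  proof (rule Bochner_Integration.integral_cong[OF refl])
    fix \<omega> assume "\<omega> \<in> space M"
    show "Z l (Suc N) \<omega> * indicator A \<omega> = F1 \<omega> + F2 \<omega> * h (X k (Suc N) \<omega>)"
      unfolding F1_def F2_def h_def Z_Suc using \<open>\<omega> \<in> space M\<close>
      by (auto simp: B_def indicator_def)
  qed
  have e2: "(\<integral>\<omega>. Z l N \<omega> * indicator A \<omega> \<partial>M) = (\<integral>\<omega>. F1 \<omega> + F2 \<omega> \<partial>M)"
  proof (rule Bochner_Integration.integral_cong[OF refl])
    fix \<omega> assume "\<omega> \<in> space M"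
    show "Z l N \<omega> * indicator A \<omega> = F1 \<omega> + F2 \<omega>"
      unfolding F1_def F2_def by (auto simp: indicator_def)
  qed
  show ?thesis unfolding e1 e2
    using \<open>(\<integral>\<omega>. F2 \<omega> * h (X k (Suc N) \<omega>) \<partial>M) \<le> (\<integral>\<omega>. F2 \<omega> \<partial>M)\<close>
    by (simp add: Bochner_Integration.integral_add[OF iF1 iprod] Bochner_Integration.integral_add[OF iF1 iF2])
qed

lemma W_le:
  assumes Ls: "\<And>n. {\<omega> \<in> space M. n \<in> L \<omega>} \<in> sets (Hm n)"
    and single: "\<And>\<omega> m n. \<omega> \<in> space M \<Longrightarrow> m \<in> L \<omega> \<Longrightarrow> n \<in> L \<omega> \<Longrightarrow> m = n"
  shows "(\<integral>\<omega>. (\<Sum>n\<in>{1..N}. Z l n \<omega> * indicator {\<omega> \<in> space M. n \<in> L \<omega>} \<omega>) \<partial>M) \<le> 1"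
proof -
  define S where "S n = {\<omega> \<in> space M. n \<in> L \<omega>}" for n
  define D where "D N = space M - (\<Union>n\<in>{1..N}. S n)" for N
  have SM: "S n \<in> sets M" for n using Ls[of n] Hm_sub unfolding S_def by auto
  have SH: "n \<le> N \<Longrightarrow> S n \<in> sets (Hm N)" for n N using Ls[of n] Hm_mono[of n N] unfolding S_def by auto
  have DH: "D N \<in> sets (Hm N)" for N
  proof -
    have "space (Hm N) - (\<Union>n\<in>{1..N}. S n) \<in> sets (Hm N)"
      by (intro sets.Diff sets.top sets.finite_UN) (auto intro: SH)
    then show ?thesis unfolding D_def by simp
  qed
  have DM: "D N \<in> sets M" for N using DH Hm_sub by auto
  define W where "W N \<omega> = (\<Sum>n\<in>{1..N}. Z l n \<omega> * indicator (S n) \<omega>) + Z l N \<omega> * indicator (D N) \<omega>" for N \<omega>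
  have iS: "integrable M (\<lambda>\<omega>. \<Sum>n\<in>{1..N}. Z l n \<omega> * indicator (S n) \<omega>)" for N
    by (rule Bochner_Integration.integrable_sum) (rule integrable_real_mult_indicator[OF SM Z_int])
  have iD: "integrable M (\<lambda>\<omega>. Z l N' \<omega> * indicator (D N) \<omega>)" for N N'
    by (rule integrable_real_mult_indicator[OF DM Z_int])
  have iW: "integrable M (W N)" for N
    unfolding W_def by (rule Bochner_Integration.integrable_add[OF iS iD])
  have "(\<integral>\<omega>. W N \<omega> \<partial>M) \<le> 1" for N
  proof (induction N)
    case 0
    have "(\<integral>\<omega>. W 0 \<omega> \<partial>M) = (\<integral>\<omega>. 1 \<partial>M)"
      by (rule Bochner_Integration.integral_cong[OF refl]) (simp add: W_def D_def Z_0)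
    then show ?case by (simp add: prob_space)
  next
    case (Suc N)
    have pw: "W (Suc N) \<omega> = W N \<omega> + (Z l (Suc N) \<omega> * indicator (D N) \<omega> - Z l N \<omega> * indicator (D N) \<omega>)"
      if w: "\<omega> \<in> space M" for \<omega>
    proof -
      have ins: "{1..Suc N} = insert (Suc N) {1..N}" by auto
      have sum: "(\<Sum>n\<in>{1..Suc N}. Z l n \<omega> * indicator (S n) \<omega>) =
          Z l (Suc N) \<omega> * indicator (S (Suc N)) \<omega> + (\<Sum>n\<in>{1..N}. Z l n \<omega> * indicator (S n) \<omega>)"
        unfolding ins by (subst sum.insert) auto
      show ?thesis
      proof (cases "\<omega> \<in> D N")
        case True
        then have nS: "\<forall>n\<in>{1..N}. \<omega> \<notin> S n" unfolding D_def by auto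
        show ?thesis
        proof (cases "\<omega> \<in> S (Suc N)")
          case True
          then have "\<omega> \<notin> D (Suc N)" unfolding D_def by auto
          then show ?thesis unfolding W_def sum using True \<open>\<omega> \<in> D N\<close> by simp
        next
          case False
          then have "\<omega> \<in> D (Suc N)" using nS w unfolding D_def by (auto simp: le_Suc_eq)
          then show ?thesis unfolding W_def sum using False \<open>\<omega> \<in> D N\<close> by simp
        qed
      next
        case False
        then obtain m where m: "m \<in> {1..N}" "\<omega> \<in> S m" using w unfolding D_def by auto
        then have "\<omega> \<notin> S (Suc N)" using single[OF w, of m "Suc N"] unfolding S_def by auto
        moreover have "\<omega> \<notin> D (Suc N)" using m unfolding D_def by auto
        ultimately show ?thesis unfolding W_def sum using False by simp
      qed
    qed
    have "(\<integral>\<omega>. W (Suc N) \<omega> \<partial>M) = (\<integral>\<omega>. W N \<omega> + (Z l (Suc N) \<omega> * indicator (D N) \<omega> - Z l N \<omega> * indicator (D N) \<omega>) \<partial>M)"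
      by (rule Bochner_Integration.integral_cong[OF refl]) (rule pw)
    also have "\<dots> = (\<integral>\<omega>. W N \<omega> \<partial>M) + ((\<integral>\<omega>. Z l (Suc N) \<omega> * indicator (D N) \<omega> \<partial>M) - (\<integral>\<omega>. Z l N \<omega> * indicator (D N) \<omega> \<partial>M))"
      by (simp add: Bochner_Integration.integral_add[OF iW Bochner_Integration.integrable_diff[OF iD iD]]
          Bochner_Integration.integral_diff[OF iD iD])
    also have "\<dots> \<le> (\<integral>\<omega>. W N \<omega> \<partial>M)" using step[OF DH[of N], of l] by simp
    finally show ?case using Suc.IH by simp
  qed
  moreover have "(\<integral>\<omega>. (\<Sum>n\<in>{1..N}. Z l n \<omega> * indicator (S n) \<omega>) \<partial>M) \<le> (\<integral>\<omega>. W N \<omega> \<partial>M)"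
  proof (rule integral_mono[OF iS iW])
    fix \<omega> assume "\<omega> \<in> space M"
    show "(\<Sum>n\<in>{1..N}. Z l n \<omega> * indicator (S n) \<omega>) \<le> W N \<omega>"
      unfolding W_def using Z_pos[of l N \<omega>] by (simp add: indicator_def)
  qed
  ultimately have "(\<integral>\<omega>. (\<Sum>n\<in>{1..N}. Z l n \<omega> * indicator (S n) \<omega>) \<partial>M) \<le> 1"
    using order_trans by blast
  then show ?thesis unfolding S_def .
qed

lemma nn_sum_le:
  assumes Ls: "\<And>n. {\<omega> \<in> space M. n \<in> L \<omega>} \<in> sets (Hm n)"
    and single: "\<And>\<omega> m n. \<omega> \<in> space M \<Longrightarrow> m \<in> L \<omega> \<Longrightarrow> n \<in> L \<omega> \<Longrightarrow> m = n"
  shows "(\<Sum>n. \<integral>\<^sup>+\<omega>. ennreal (if 1 \<le> n \<and> n \<in> L \<omega> then Z l n \<omega> else 0) \<partial>M) \<le> 1"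
proof (rule suminf_le_const[OF summableI])
  fix N
  define S where "S n = {\<omega> \<in> space M. n \<in> L \<omega>}" for n
  have SM: "S n \<in> sets M" for n using Ls[of n] Hm_sub unfolding S_def by auto
  have meas: "(\<lambda>\<omega>. ennreal (if 1 \<le> n \<and> n \<in> L \<omega> then Z l n \<omega> else 0)) \<in> borel_measurable M" for n
  proof -
    have "(\<lambda>\<omega>. if 1 \<le> n \<and> n \<in> L \<omega> then Z l n \<omega> else 0) \<in> borel_measurable M"
    proof (rule measurable_cong[THEN iffD1])
      show "(\<lambda>\<omega>. Z l n \<omega> * indicator (S n) \<omega> * (if 1 \<le> n then 1 else 0)) \<in> borel_measurable M"
        using Z_measM SM by measurable
      fix \<omega> assume "\<omega> \<in> space M"
      then show "Z l n \<omega> * indicator (S n) \<omega> * (if 1 \<le> n then 1 else 0) = (if 1 \<le> n \<and> n \<in> L \<omega> then Z l n \<omega> else 0)"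
        unfolding S_def by (auto simp: indicator_def)
    qed
    then show ?thesis by measurable
  qed
  have iS: "integrable M (\<lambda>\<omega>. \<Sum>n\<in>{1..N}. Z l n \<omega> * indicator (S n) \<omega>)"
    by (rule Bochner_Integration.integrable_sum) (rule integrable_real_mult_indicator[OF SM Z_int])
  have "(\<Sum>n<N. \<integral>\<^sup>+\<omega>. ennreal (if 1 \<le> n \<and> n \<in> L \<omega> then Z l n \<omega> else 0) \<partial>M)
     = (\<integral>\<^sup>+\<omega>. (\<Sum>n<N. ennreal (if 1 \<le> n \<and> n \<in> L \<omega> then Z l n \<omega> else 0)) \<partial>M)"
    by (rule nn_integral_sum[symmetric]) (rule meas)
  also have "\<dots> \<le> (\<integral>\<^sup>+\<omega>. ennreal (\<Sum>n\<in>{1..N}. Z l n \<omega> * indicator (S n) \<omega>) \<partial>M)"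
  proof (rule nn_integral_mono)
    fix \<omega> assume w: "\<omega> \<in> space M"
    let ?h = "\<lambda>n. if 1 \<le> n \<and> n \<in> L \<omega> then Z l n \<omega> else 0"
    have h0: "0 \<le> ?h n" for n using Z_pos[of l n \<omega>] by auto
    have "(\<Sum>n<N. ennreal (?h n)) = ennreal (\<Sum>n<N. ?h n)" by (rule sum_ennreal) (rule h0)
    also have "(\<Sum>n<N. ?h n) \<le> (\<Sum>n\<in>{..N}. ?h n)" by (rule sum_mono2) (use h0 in auto)
    also have "(\<Sum>n\<in>{..N}. ?h n) = (\<Sum>n\<in>{1..N}. ?h n)"
      by (rule sum.mono_neutral_right) auto
    also have "\<dots> = (\<Sum>n\<in>{1..N}. Z l n \<omega> * indicator (S n) \<omega>)"
      by (rule sum.cong) (use w in \<open>auto simp: S_def indicator_def\<close>)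
    finally show "(\<Sum>n<N. ennreal (?h n)) \<le> ennreal (\<Sum>n\<in>{1..N}. Z l n \<omega> * indicator (S n) \<omega>)"
      by (simp add: ennreal_leI)
  qed
  also have "\<dots> = ennreal (\<integral>\<omega>. (\<Sum>n\<in>{1..N}. Z l n \<omega> * indicator (S n) \<omega>) \<partial>M)"
    by (rule nn_integral_eq_integral[OF iS])
       (auto intro!: AE_I2 sum_nonneg simp: indicator_def less_imp_le[OF Z_pos])
  also have "\<dots> \<le> ennreal 1"
    using W_le[OF Ls single, where N=N and l=l] unfolding S_def by (intro ennreal_leI) simp
  finally show "(\<Sum>n<N. \<integral>\<^sup>+\<omega>. ennreal (if 1 \<le> n \<and> n \<in> L \<omega> then Z l n \<omega> else 0) \<partial>M) \<le> 1"
    by simp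
qed

lemma Tm:
  assumes "{\<omega> \<in> space M. n \<in> L \<omega>} \<in> sets M"
  shows "(\<lambda>\<omega>. if 1 \<le> n \<and> n \<in> L \<omega> then Z l n \<omega> else 0) \<in> borel_measurable M"
proof (rule measurable_cong[THEN iffD1])
  show "(\<lambda>\<omega>. Z l n \<omega> * indicator {\<omega> \<in> space M. n \<in> L \<omega>} \<omega> * (if 1 \<le> n then 1 else 0)) \<in> borel_measurable M"
    using Z_measM assms by measurable
  fix \<omega> assume "\<omega> \<in> space M"
  then show "Z l n \<omega> * indicator {\<omega> \<in> space M. n \<in> L \<omega>} \<omega> * (if 1 \<le> n then 1 else 0) = (if 1 \<le> n \<and> n \<in> L \<omega> then Z l n \<omega> else 0)"
    by (auto simp: indicator_def)
qed

lemma Z_expand: "Z l n \<omega> = exp (l * ((\<Sum>t\<in>{1..n}. if sel t \<omega> = k then X k t \<omega> else 0) - real (tk sel k n \<omega>) * mu k)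
    - real (tk sel k n \<omega>) * l\<^sup>2 / 8)"
proof -
  let ?B = "{t \<in> {1..n}. sel t \<omega> = k}"
  have "(\<Sum>t\<in>{1..n}. if sel t \<omega> = k then l * (X k t \<omega> - mu k) - l\<^sup>2 / 8 else 0)
      = (\<Sum>t\<in>?B. l * (X k t \<omega> - mu k) - l\<^sup>2 / 8)"
    by (rule sum.inter_filter[symmetric]) simp
  also have "\<dots> = l * (\<Sum>t\<in>?B. X k t \<omega>) - real (card ?B) * (l * mu k) - real (card ?B) * (l\<^sup>2 / 8)"
    by (simp add: sum_subtractf sum_distrib_left right_diff_distrib)
  also have "(\<Sum>t\<in>?B. X k t \<omega>) = (\<Sum>t\<in>{1..n}. if sel t \<omega> = k then X k t \<omega> else 0)"
    by (rule sum.inter_filter) simp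
  finally show ?thesis unfolding Z_def tk_def by (simp add: algebra_simps)
qed

end

lemma key_real:
  fixes t eps delta x m :: real and s :: nat
  assumes t: "t > 0" and ts: "t \<ge> eps * real s" and d: "delta > 0" and dev: "\<bar>x / t - m\<bar> > delta"
  shows "1 \<le> exp (- (2 * eps * delta\<^sup>2)) ^ s *
     (exp ((4 * delta) * (x - t * m) - t * (4 * delta)\<^sup>2 / 8) + exp ((- 4 * delta) * (x - t * m) - t * (- 4 * delta)\<^sup>2 / 8))"
proof -
  have q: "exp (- (2 * eps * delta\<^sup>2)) ^ s = exp (- (2 * eps * delta\<^sup>2 * real s))"
    using exp_of_nat_mult[of s "- (2 * eps * delta\<^sup>2)"] by (simp add: algebra_simps)
  have dd: "0 < delta\<^sup>2" using d by simp
  have key: "2 * eps * delta\<^sup>2 * real s \<le> 2 * delta\<^sup>2 * t"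
    using mult_left_mono[OF ts, of "2 * delta\<^sup>2"] dd by (simp add: algebra_simps)
  have A: "\<bar>x - t * m\<bar> > t * delta"
  proof -
    have "x / t - m = (x - t * m) / t" using t by (simp add: diff_divide_distrib)
    then have "\<bar>(x - t * m) / t\<bar> > delta" using dev by simp
    then have "\<bar>x - t * m\<bar> / t > delta" using t by (simp add: abs_divide)
    then have "delta * t < \<bar>x - t * m\<bar>" using pos_less_divide_eq[OF t] by blast
    then show ?thesis by (simp add: mult.commute)
  qed
  define E1 where "E1 = (4 * delta) * (x - t * m) - t * (4 * delta)\<^sup>2 / 8"
  define E2 where "E2 = (- 4 * delta) * (x - t * m) - t * (- 4 * delta)\<^sup>2 / 8"
  have "E1 \<ge> 2 * delta\<^sup>2 * t \<or> E2 \<ge> 2 * delta\<^sup>2 * t"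
  proof (cases "x - t * m \<ge> 0")
    case True
    then have "x - t * m > t * delta" using A by simp
    then have "4 * delta * (x - t * m) \<ge> 4 * delta * (t * delta)" using d by simp
    then show ?thesis unfolding E1_def by (simp add: power2_eq_square algebra_simps)
  next
    case False
    then have "t * m - x > t * delta" using A by simp
    then have "4 * delta * (t * m - x) \<ge> 4 * delta * (t * delta)" using d by simp
    then show ?thesis unfolding E2_def by (simp add: power2_eq_square algebra_simps)
  qed
  then have "exp E1 + exp E2 \<ge> exp (2 * eps * delta\<^sup>2 * real s)"
  proof
    assume "E1 \<ge> 2 * delta\<^sup>2 * t"
    then have "exp E1 \<ge> exp (2 * eps * delta\<^sup>2 * real s)" using key by simp
    then show ?thesis using exp_gt_zero[of E2] by linarith
  next
    assume "E2 \<ge> 2 * delta\<^sup>2 * t"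
    then have "exp E2 \<ge> exp (2 * eps * delta\<^sup>2 * real s)" using key by simp
    then show ?thesis using exp_gt_zero[of E1] by linarith
  qed
  then have "exp (- (2 * eps * delta\<^sup>2 * real s)) * (exp E1 + exp E2) \<ge>
      exp (- (2 * eps * delta\<^sup>2 * real s)) * exp (2 * eps * delta\<^sup>2 * real s)"
    by (intro mult_left_mono) auto
  moreover have "exp (- (2 * eps * delta\<^sup>2 * real s)) * exp (2 * eps * delta\<^sup>2 * real s) = 1"
    using exp_minus_inverse[of "2 * eps * delta\<^sup>2 * real s"] by (simp add: mult.commute)
  ultimately show ?thesis unfolding q E1_def[symmetric] E2_def[symmetric] by simp
qed


theorem lemma2:
  fixes M :: "'a measure" and K :: nat
    and X :: "nat \<Rightarrow> nat \<Rightarrow> 'a \<Rightarrow> real" and mu :: "nat \<Rightarrow> real"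
    and sel :: "nat \<Rightarrow> 'a \<Rightarrow> nat"
    and k :: nat and eps delta :: real
    and Lam0 :: "'a \<Rightarrow> nat set" and Lam :: "nat \<Rightarrow> 'a \<Rightarrow> nat set"
  assumes P: "prob_space M"
    and K: "K \<ge> 1"
    and X_rv: "\<And>j t. j \<in> {1..K} \<Longrightarrow> t \<ge> 1 \<Longrightarrow> X j t \<in> borel_measurable M"
    and X_range: "\<And>j t \<omega>. j \<in> {1..K} \<Longrightarrow> t \<ge> 1 \<Longrightarrow> \<omega> \<in> space M \<Longrightarrow> X j t \<omega> \<in> {0..1}"
    and X_indep: "prob_space.indep_vars M (\<lambda>_. borel) (\<lambda>(j, t). X j t) ({1..K} \<times> {1..})"
    and X_ident: "\<And>j t. j \<in> {1..K} \<Longrightarrow> t \<ge> 1 \<Longrightarrow> distr M borel (X j t) = distr M borel (X j 1)"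
    and X_mean: "\<And>j. j \<in> {1..K} \<Longrightarrow> prob_space.expectation M (X j 1) = mu j"
    and sel_range: "\<And>n \<omega>. n \<ge> 1 \<Longrightarrow> \<omega> \<in> space M \<Longrightarrow> sel n \<omega> \<in> {1..K}"
    and sel_rv: "\<And>n. n \<ge> 1 \<Longrightarrow> sel n \<in> measurable M (count_space UNIV)"
    and sel_policy: "\<And>n. n \<ge> 1 \<Longrightarrow> sel n \<in> measurable (hist_sigma M X sel n) (count_space UNIV)"
    and k: "k \<in> {1..K}"
    and eps: "eps > 0"
    and Lam0_rv: "\<And>n. {\<omega> \<in> space M. n \<in> Lam0 \<omega>} \<in> sets M"
    and cover: "\<And>\<omega>. \<omega> \<in> space M \<Longrightarrow> Lam0 \<omega> \<subseteq> (\<Union>s\<in>{1..}. Lam s \<omega>)"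
    and count: "\<And>s n \<omega>. s \<ge> 1 \<Longrightarrow> \<omega> \<in> space M \<Longrightarrow> n \<in> Lam s \<omega> \<Longrightarrow>
                  real (tk sel k n \<omega>) \<ge> eps * real s"
    and single: "\<And>s \<omega> m n. s \<ge> 1 \<Longrightarrow> \<omega> \<in> space M \<Longrightarrow> m \<in> Lam s \<omega> \<Longrightarrow> n \<in> Lam s \<omega> \<Longrightarrow> m = n"
    and adapted: "\<And>s n. s \<ge> 1 \<Longrightarrow> {\<omega> \<in> space M. n \<in> Lam s \<omega>} \<in> sets (Fsig M K X sel n)"
    and delta: "delta > 0"
  shows "(\<integral>\<^sup>+ \<omega>. (\<Sum>n. if n \<ge> 1 \<and> n \<in> Lam0 \<omega> \<and> \<bar>muhat X sel k n \<omega> - mu k\<bar> > delta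
                        then (1::ennreal) else 0) \<partial>M)
         \<le> ennreal (1 / (eps * delta\<^sup>2))"
proof -
  interpret B: bandit M K X mu sel k
    by (intro bandit.intro bandit_axioms.intro P X_rv X_range X_indep X_ident X_mean sel_range sel_policy k)
  define a where "a = 2 * eps * delta\<^sup>2"
  define q where "q = exp (- a)"
  have a0: "a > 0" unfolding a_def using eps delta by simp
  have q0: "0 < q" "q < 1" unfolding q_def using a0 by auto
  define T where "T l s n \<omega> = (if 1 \<le> n \<and> n \<in> Lam s \<omega> then B.Z l n \<omega> else 0)" for l s n \<omega>
  define g where "g s n \<omega> = ennreal (q ^ s * (if 1 \<le> s then T (4 * delta) s n \<omega> + T (- 4 * delta) s n \<omega> else 0))" for s n \<omega>
  define f where "f \<omega> = (\<Sum>n. if n \<ge> 1 \<and> n \<in> Lam0 \<omega> \<and> \<bar>muhat X sel k n \<omega> - mu k\<bar> > delta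
                        then (1::ennreal) else 0)" for \<omega>
  have Ls: "s \<ge> 1 \<Longrightarrow> {\<omega> \<in> space M. n \<in> Lam s \<omega>} \<in> sets (B.Hm n)" for s n
    using adapted B.Fsig_Hm by blast
  have LsM: "s \<ge> 1 \<Longrightarrow> {\<omega> \<in> space M. n \<in> Lam s \<omega>} \<in> sets M" for s n
    using Ls B.Hm_sub by blast
  have T0: "0 \<le> T l s n \<omega>" for l s n \<omega> unfolding T_def using B.Z_pos[of l n \<omega>] by auto
  have gm: "g s n \<in> borel_measurable M" for s n
  proof (cases "1 \<le> s")
    case True
    have "T (4 * delta) s n \<in> borel_measurable M" "T (- 4 * delta) s n \<in> borel_measurable M"
      unfolding T_def[abs_def] using B.Tm[OF LsM[OF True]] by auto
    then show ?thesis unfolding g_def using True by measurable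
  next
    case False
    then show ?thesis unfolding g_def by simp
  qed
  have tw: "(if n \<ge> 1 \<and> n \<in> Lam0 \<omega> \<and> \<bar>muhat X sel k n \<omega> - mu k\<bar> > delta then (1::ennreal) else 0)
      \<le> (\<Sum>s. g s n \<omega>)" if w: "\<omega> \<in> space M" for n \<omega>
  proof (cases "n \<ge> 1 \<and> n \<in> Lam0 \<omega> \<and> \<bar>muhat X sel k n \<omega> - mu k\<bar> > delta")
    case True
    then obtain s where s: "s \<ge> 1" "n \<in> Lam s \<omega>" using cover[OF w] by auto
    have ts: "real (tk sel k n \<omega>) \<ge> eps * real s" using count[OF s(1) w s(2)] .
    have tpos: "real (tk sel k n \<omega>) > 0"
      using ts eps s(1) by (smt (verit) of_nat_1 of_nat_mono mult_le_cancel_left1)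
    define Sm where "Sm = (\<Sum>t\<in>{1..n}. if sel t \<omega> = k then X k t \<omega> else 0)"
    have dev: "\<bar>Sm / real (tk sel k n \<omega>) - mu k\<bar> > delta"
      using True unfolding Sm_def by (simp add: muhat_def)
    note kr = key_real[OF tpos ts delta dev]
    have "1 \<le> q ^ s * (T (4 * delta) s n \<omega> + T (- 4 * delta) s n \<omega>)"
      unfolding q_def a_def T_def B.Z_expand Sm_def[symmetric] using s True kr
      by (simp add: power2_eq_square algebra_simps)
    then have "1 \<le> g s n \<omega>" unfolding g_def using s by (simp add: ennreal_leI)
    also have "g s n \<omega> \<le> (\<Sum>s. g s n \<omega>)"
      using sum_le_suminf[OF summableI, of "{s}" "\<lambda>s. g s n \<omega>"] by simp
    finally show ?thesis using True by simp
  qed auto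
  have pw: "f \<omega> \<le> (\<Sum>s. \<Sum>n. g s n \<omega>)" if w: "\<omega> \<in> space M" for \<omega>
    unfolding f_def
  proof (rule suminf_le_const[OF summableI])
    fix N
    have "(\<Sum>n<N. if n \<ge> 1 \<and> n \<in> Lam0 \<omega> \<and> \<bar>muhat X sel k n \<omega> - mu k\<bar> > delta then (1::ennreal) else 0)
        \<le> (\<Sum>n<N. \<Sum>s. g s n \<omega>)"
      by (rule sum_mono) (rule tw[OF w])
    also have "\<dots> = (\<Sum>s. \<Sum>n<N. g s n \<omega>)"
      by (rule suminf_sum[symmetric]) (rule summableI)
    also have "\<dots> \<le> (\<Sum>s. \<Sum>n. g s n \<omega>)"
      by (rule suminf_le[OF _ summableI summableI]) (rule sum_le_suminf[OF summableI], auto)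
    finally show "(\<Sum>n<N. if n \<ge> 1 \<and> n \<in> Lam0 \<omega> \<and> \<bar>muhat X sel k n \<omega> - mu k\<bar> > delta then (1::ennreal) else 0)
        \<le> (\<Sum>s. \<Sum>n. g s n \<omega>)" .
  qed
  have ps: "(\<Sum>n. integral\<^sup>N M (g s n)) \<le> ennreal (if s = 0 then 0 else 2 * q ^ s)" for s
  proof (cases "1 \<le> s")
    case False
    then show ?thesis unfolding g_def by simp
  next
    case True
    have sgl: "\<And>\<omega> m n. \<omega> \<in> space M \<Longrightarrow> m \<in> Lam s \<omega> \<Longrightarrow> n \<in> Lam s \<omega> \<Longrightarrow> m = n"
      using single[OF True] by blast
    have Tm: "T l s n \<in> borel_measurable M" for l n
      unfolding T_def[abs_def] using B.Tm[OF LsM[OF True]] by auto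
    have Tm': "(\<lambda>\<omega>. ennreal (T l s n \<omega>)) \<in> borel_measurable M" for l n
      using Tm[of l n] by measurable
    have e: "integral\<^sup>N M (g s n) = ennreal (q ^ s) * ((\<integral>\<^sup>+\<omega>. ennreal (T (4 * delta) s n \<omega>) \<partial>M) + (\<integral>\<^sup>+\<omega>. ennreal (T (- 4 * delta) s n \<omega>) \<partial>M))" for n
    proof -
      have "integral\<^sup>N M (g s n) = (\<integral>\<^sup>+\<omega>. ennreal (q ^ s) * (ennreal (T (4 * delta) s n \<omega>) + ennreal (T (- 4 * delta) s n \<omega>)) \<partial>M)"
        unfolding g_def using True q0 T0 by (simp add: ennreal_mult ennreal_plus)
      also have "\<dots> = ennreal (q ^ s) * ((\<integral>\<^sup>+\<omega>. ennreal (T (4 * delta) s n \<omega>) \<partial>M) + (\<integral>\<^sup>+\<omega>. ennreal (T (- 4 * delta) s n \<omega>) \<partial>M))"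
        using Tm' by (simp add: nn_integral_cmult nn_integral_add)
      finally show ?thesis .
    qed
    have b1: "(\<Sum>n. \<integral>\<^sup>+\<omega>. ennreal (T l s n \<omega>) \<partial>M) \<le> 1" for l
      unfolding T_def using B.nn_sum_le[OF Ls[OF True] sgl] .
    have "(\<Sum>n. integral\<^sup>N M (g s n)) = ennreal (q ^ s) * ((\<Sum>n. \<integral>\<^sup>+\<omega>. ennreal (T (4 * delta) s n \<omega>) \<partial>M) + (\<Sum>n. \<integral>\<^sup>+\<omega>. ennreal (T (- 4 * delta) s n \<omega>) \<partial>M))"
      unfolding e ennreal_suminf_cmult by (simp add: suminf_add[OF summableI summableI])
    also have "\<dots> \<le> ennreal (q ^ s) * (1 + 1)"
      by (intro mult_left_mono add_mono b1) auto
    also have "\<dots> = ennreal (if s = 0 then 0 else 2 * q ^ s)"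
      using True q0 by (simp, subst ennreal_mult) (auto simp: mult.commute)
    finally show ?thesis .
  qed
  have sums: "(\<lambda>s. if s = 0 then 0 else 2 * q ^ s) sums (2 * q / (1 - q))"
  proof -
    have "(\<lambda>s. q ^ s) sums (1 / (1 - q))" by (rule geometric_sums) (use q0 in simp)
    then have "(\<lambda>s. (2 * q) * q ^ s) sums ((2 * q) * (1 / (1 - q)))" by (rule sums_mult)
    then have "(\<lambda>s. (\<lambda>s. if s = 0 then 0 else 2 * q ^ s) (Suc s)) sums (2 * q / (1 - q))"
      by (simp add: mult.assoc)
    from sums_Suc_iff[THEN iffD1, OF this] show ?thesis by simp
  qed
  have fin: "2 * q / (1 - q) \<le> 1 / (eps * delta\<^sup>2)"
  proof -
    have "1 + a \<le> exp a" by (rule exp_ge_add_one_self)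
    then have "q * (1 + a) \<le> q * exp a" using q0 by simp
    also have "q * exp a = 1" unfolding q_def by (simp add: exp_minus field_simps)
    finally have "q * a \<le> 1 - q" by (simp add: algebra_simps)
    then have "2 * q / (1 - q) \<le> 2 / a" using q0 a0 by (simp add: field_simps)
    also have "2 / a = 1 / (eps * delta\<^sup>2)" unfolding a_def using eps delta by simp
    finally show ?thesis .
  qed
  have "(\<integral>\<^sup>+ \<omega>. f \<omega> \<partial>M) \<le> (\<integral>\<^sup>+ \<omega>. (\<Sum>s. \<Sum>n. g s n \<omega>) \<partial>M)"
    by (rule nn_integral_mono) (rule pw)
  also have "\<dots> = (\<Sum>s. \<integral>\<^sup>+ \<omega>. (\<Sum>n. g s n \<omega>) \<partial>M)"
  proof (rule nn_integral_suminf)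
    fix s show "(\<lambda>\<omega>. \<Sum>n. g s n \<omega>) \<in> borel_measurable M"
      by (rule borel_measurable_suminf_order) (rule gm)
  qed
  also have "\<dots> = (\<Sum>s. \<Sum>n. integral\<^sup>N M (g s n))"
    by (simp only: nn_integral_suminf[OF gm])
  also have "\<dots> \<le> (\<Sum>s. ennreal (if s = 0 then 0 else 2 * q ^ s))"
    by (rule suminf_le[OF ps summableI summableI])
  also have "\<dots> = ennreal (2 * q / (1 - q))"
  proof -
    have "(\<Sum>s. ennreal (if s = 0 then 0 else 2 * q ^ s)) = ennreal (\<Sum>s. if s = 0 then 0 else 2 * q ^ s)"
      by (rule suminf_ennreal2) (use q0 sums_summable[OF sums] in auto)
    also have "(\<Sum>s. if s = 0 then 0 else 2 * q ^ s) = 2 * q / (1 - q)"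
      by (rule sums_unique[OF sums, symmetric])
    finally show ?thesis .
  qed
  also have "\<dots> \<le> ennreal (1 / (eps * delta\<^sup>2))" using fin by (rule ennreal_leI)
  finally show ?thesis unfolding f_def .
qed

end
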